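(* Let $q\ge2$ be an even integer. The interpolated fusion ring $\mathcal{R}_q$ has rank $q+1$ and Frobenius–Perron dimension $q(q^2-1)$, its basis consists of $x_{1,1}$, $x_{q-1,c}$ ($1\le c\le q/2$), $x_{q,1}$, $x_{q+1,c}$ ($1\le c\le (q-2)/2$) with $\mathrm{FPdim}(x_{d,c})=d$, and its fusion rules are (all sums over $c_3$, resp. $c_2$, run over the allowed index range of the corresponding basis elements): $x_{q-1,c_1}x_{q-1,c_2}=\delta_{c_1,c_2}x_{1,1}+\sum_{c_3:\ c_1+c_2+c_3\notin\{q+1,\,2\max(c_1,c_2,c_3)\}}x_{q-1,c_3}+(1-\delta_{c_1,c_2})x_{q,1}+\sum_{c_3}x_{q+1,c_3}$; $x_{q-1,c_1}x_{q,1}=\sum_{c_2}(1-\delta_{c_1,c_2})x_{q-1,c_2}+x_{q,1}+\sum_{c_2}x_{q+1,c_2}$; $x_{q-1,c_1}x_{q+1,c_2}=\sum_{c_3}x_{q-1,c_3}+x_{q,1}+\sum_{c_3}x_{q+1,c_3}$; $x_{q,1}x_{q,1}=x_{1,1}+\sum_cx_{q-1,c}+x_{q,1}+\sum_cx_{q+1,c}$; $x_{q,1}x_{q+1,c_1}=\sum_{c_2}x_{q-1,c_2}+x_{q,1}+\sum_{c_2}(1+\delta_{c_1,c_2})x_{q+1,c_2}$; $x_{q+1,c_1}x_{q+1,c_2}=\delta_{c_1,c_2}x_{1,1}+\sum_{c_3}x_{q-1,c_3}+(1+\delta_{c_1,c_2})x_{q,1}+\sum_{c_3:\ c_1+c_2+c_3\notin\{q-1,\,2\max(c_1,c_2,c_3)\}}x_{q+1,c_3}+\sum_{c_3:\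 c_1+c_2+c_3\in\{q-1,\,2\max(c_1,c_2,c_3)\}}2x_{q+1,c_3}$; and $x_{1,1}$ is the unit; the remaining products follow by commutativity.
   Context: $\zeta_n=\exp(2\pi i/n)$. A fusion ring is a ring which is a free $\mathbb{Z}$-module with finite basis, nonnegative integer structure constants, a unit basis element, a duality on the basis and Frobenius reciprocity; $\mathrm{FPdim}$ is the unique ring homomorphism to $\mathbb{C}$ positive on the basis, and $\mathrm{FPdim}$ of the ring is $\sum_b\mathrm{FPdim}(b)^2$. For even $q\ge2$, $\mathcal{R}_q$ is the commutative fusion ring whose basis is the set of rows of the following formal table $(\lambda_{x,s})$ and whose structure constants are $N_{x,y}^z=\sum_s\lambda_{x,s}\lambda_{y,s}\overline{\lambda_{z,s}}/\mathfrak{c}_s$ with $\mathfrak{c}_s=\sum_x|\lambda_{x,s}|^2$. Columns: $C_0$; $C_1$; $A_k$ ($1\le k\le\frac{q-2}{2}$); $B_k$ ($1\le k\le\frac q2$). Rows (entries in that column order): $x_{1,1}$: $1,1,1,1$. $x_{q-1,c}$ ($1\le c\le \frac q2$): $q-1,\,-1,\,0,\,-\zeta_{q+1}^{kc}-\zeta_{q+1}^{-kc}$. $x_{q,1}$: $q,0,1,-1$. $x_{q+1,c}$ ($1\le c\le\frac{q-2}{2}$): $q+1,\,1,\,\zeta_{q-1}^{kc}+\zeta_{q-1}^{-kc},\,0$. (For $q$ a power of $2$ this is the character table of $\mathrm{PSL}(2,q)$.) *)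

theory Defs
  imports Complex_Main
begin

definition zeta :: "nat \<Rightarrow> complex" where
  "zeta n = exp (2 * of_real pi * \<i> / of_nat n)"

text \<open>Basis labels: One = x_{1,1}, Xm c = x_{q-1,c}, Xq = x_{q,1}, Xp c = x_{q+1,c}.\<close>
datatype lbl = One | Xm nat | Xq | Xp nat

datatype col = C0 | C1 | A nat | B nat

definition basis :: "nat \<Rightarrow> lbl set" where
  "basis q = {One} \<union> Xm ` {1..q div 2} \<union> {Xq} \<union> Xp ` {1..(q - 2) div 2}"

definition cols :: "nat \<Rightarrow> col set" where
  "cols q = {C0, C1} \<union> A ` {1..(q - 2) div 2} \<union> B ` {1..q div 2}"

fun lam :: "nat \<Rightarrow> lbl \<Rightarrow> col \<Rightarrow> complex" where
  "lam q One s = 1"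
| "lam q (Xm c) C0 = of_nat q - 1"
| "lam q (Xm c) C1 = -1"
| "lam q (Xm c) (A k) = 0"
| "lam q (Xm c) (B k) = - (zeta (q+1) ^ (k*c) + inverse (zeta (q+1) ^ (k*c)))"
| "lam q Xq C0 = of_nat q"
| "lam q Xq C1 = 0"
| "lam q Xq (A k) = 1"
| "lam q Xq (B k) = -1"
| "lam q (Xp c) C0 = of_nat q + 1"
| "lam q (Xp c) C1 = 1"
| "lam q (Xp c) (A k) = zeta (q-1) ^ (k*c) + inverse (zeta (q-1) ^ (k*c))"
| "lam q (Xp c) (B k) = 0"

definition colnorm :: "nat \<Rightarrow> col \<Rightarrow> complex" where
  "colnorm q s = (\<Sum>x\<in>basis q. of_real ((cmod (lam q x s))\<^sup>2))"

definition fus :: "nat \<Rightarrow> lbl \<Rightarrow> lbl \<Rightarrow> lbl \<Rightarrow> complex" where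
  "fus q x y z = (\<Sum>s\<in>cols q. lam q x s * lam q y s * cnj (lam q z s) / colnorm q s)"

text \<open>Ring homomorphisms R_q -> C that are positive on the basis
  (determined by their values on the basis; extended by 0 off the basis).\<close>
definition is_pos_hom :: "nat \<Rightarrow> (lbl \<Rightarrow> complex) \<Rightarrow> bool" where
  "is_pos_hom q f \<longleftrightarrow>
     f One = 1 \<and>
     (\<forall>x\<in>basis q. \<forall>y\<in>basis q. f x * f y = (\<Sum>z\<in>basis q. fus q x y z * f z)) \<and>
     (\<forall>x\<in>basis q. Im (f x) = 0 \<and> 0 < Re (f x)) \<and>
     (\<forall>x. x \<notin> basis q \<longrightarrow> f x = 0)"

definition fpdim :: "nat \<Rightarrow> lbl \<Rightarrow> complex" where
  "fpdim q = (THE f. is_pos_hom q f)"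

definition fpdim_ring :: "nat \<Rightarrow> complex" where
  "fpdim_ring q = (\<Sum>b\<in>basis q. (fpdim q b)\<^sup>2)"

end

theory Submission
  imports Defs
begin


definition E :: "nat \<Rightarrow> int \<Rightarrow> complex" where
  "E m t = cis (2 * pi * of_int t / of_nat m)"

lemma E_add: "E m (a + b) = E m a * E m b"
  unfolding E_def cis_mult by (simp add: distrib_left add_divide_distrib)

lemma E_0[simp]: "E m 0 = 1" unfolding E_def by simp

lemma E_mult_m: "E m (int m * j) = 1"
proof (cases "m = 0")
  case True then show ?thesis by (simp add: E_def)
next
  case False
  have "2 * pi * of_int (int m * j) / of_nat m = 2 * pi * of_int j"
    using False by (simp add: field_simps)
  then show ?thesis unfolding E_def by simp
qed

lemma E_eq_1_iff: assumes "m > 0" shows "E m j = 1 \<longleftrightarrow> int m dvd j"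
proof
  assume "E m j = 1"
  then have "cos (2 * pi * of_int j / of_nat m) = 1" unfolding E_def
    by (metis Re_complex_of_real complex_of_real_def cos_n_Re_cis_pow_n one_complex.simps(1) power_one_right of_nat_1 mult_1)
  then obtain n :: int where n: "2 * pi * of_int j / of_nat m = of_int n * 2 * pi"
    unfolding cos_one_2pi_int by auto
  then have "real_of_int j = real_of_int n * real m" using assms pi_gt_zero
    by (simp add: field_simps)
  then have "real_of_int j = real_of_int (n * int m)" by simp
  then have "j = n * int m" by (metis of_int_eq_iff)
  then show "int m dvd j" by simp
next
  assume "int m dvd j" then obtain n where "j = int m * n" by auto
  then show "E m j = 1" using E_mult_m by simp
qed

lemma zeta_pow: "zeta m ^ n = E m (int n)"
proof -
  have "zeta m = cis (2 * pi / of_nat m)" unfolding zeta_def cis_conv_exp by (simp add: field_simps)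
  then show ?thesis unfolding E_def by (simp add: DeMoivre field_simps)
qed

lemma E_minus: "inverse (E m t) = E m (- t)"
  unfolding E_def by simp

lemma E_cnj: "cnj (E m t) = E m (- t)"
  unfolding E_def by (simp add: cis_cnj)

lemma E_pow: "E m j ^ k = E m (j * int k)"
  by (induction k) (simp_all add: E_add algebra_simps)

lemma geom_E: assumes "m > 0"
  shows "(\<Sum>k<m. E m (j * int k)) = (if int m dvd j then of_nat m else 0)"
proof (cases "int m dvd j")
  case True
  then obtain n where "j = int m * n" by auto
  then have "E m (j * int k) = 1" for k using E_mult_m[of m "n * int k"] by (simp add: mult.assoc)
  then show ?thesis using True by simp
next
  case False
  let ?w = "E m j"
  have w1: "?w \<noteq> 1" using E_eq_1_iff[OF assms] False by simp
  have wm: "?w ^ m = 1" using E_pow[of m j m] E_mult_m[of m j] by (simp add: mult.commute)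
  have "(\<Sum>k<m. E m (j * int k)) = (\<Sum>k<m. ?w ^ k)" by (simp add: E_pow)
  also have "\<dots> = 0" using geometric_sum[OF w1, of m] wm by simp
  finally show ?thesis using False by simp
qed

definition ck :: "nat \<Rightarrow> int \<Rightarrow> nat \<Rightarrow> complex" where
  "ck m j k = E m (j * int k) + E m (- (j * int k))"

lemma ck_mult: "ck m a k * ck m b k = ck m (a + b) k + ck m (a - b) k"
  unfolding ck_def by (simp add: E_add[symmetric] algebra_simps)

lemma ck_0[simp]: "ck m 0 k = 2" unfolding ck_def by simp

lemma ck_cnj: "cnj (ck m a k) = ck m a k"
  unfolding ck_def by (simp add: E_cnj)

lemma ck_sum: assumes "m = 2 * h + 1"
  shows "(\<Sum>k\<in>{1..h}. ck m j k) = (if int m dvd j then of_nat m - 1 else -1)"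
proof -
  have "(\<Sum>k\<in>{1..h}. E m (- (j * int k))) = (\<Sum>k\<in>{h+1..2*h}. E m (j * int k))"
  proof (rule sum.reindex_bij_witness[of _ "\<lambda>k. m - k" "\<lambda>k. m - k"])
    fix k assume k: "k \<in> {1..h}"
    have "E m (j * int (m - k)) = E m (- (j * int k) + int m * j)"
      using k assms by (simp add: of_nat_diff algebra_simps)
    also have "\<dots> = E m (- (j * int k))" using E_add[of m "- (j * int k)" "int m * j"] E_mult_m[of m "j"] by simp
    finally show "E m (j * int (m - k)) = E m (- (j * int k))" .
  qed (use assms in auto)
  then have "(\<Sum>k\<in>{1..h}. ck m j k) = (\<Sum>k\<in>{1..h}. E m (j * int k)) + (\<Sum>k\<in>{h+1..2*h}. E m (j * int k))"
    unfolding ck_def by (simp add: sum.distrib)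
  also have "\<dots> = (\<Sum>k\<in>{1..2*h}. E m (j * int k))"
    by (subst sum.union_disjoint[symmetric]) (auto intro!: sum.cong)
  also have "\<dots> = (\<Sum>k<m. E m (j * int k)) - 1"
  proof -
    have "{..<m} = insert 0 {1..2*h}" using assms by auto
    then show ?thesis by simp
  qed
  finally show ?thesis using geom_E[of m j] assms by simp
qed


lemma dvd_small: "- int m < j \<Longrightarrow> j < int m \<Longrightarrow> (int m dvd j \<longleftrightarrow> j = 0)"
proof
  assume h: "- int m < j" "j < int m" "int m dvd j"
  then obtain t where t: "j = int m * t" by auto
  have a: "t \<ge> 1 \<Longrightarrow> int m * t \<ge> int m" using mult_left_mono[of 1 t "int m"] by simp
  have b: "t \<le> -1 \<Longrightarrow> int m * t \<le> - int m" using mult_left_mono[of t "-1" "int m"] by simp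
  have "t = 0"
  proof (rule ccontr)
    assume "t \<noteq> 0"
    then have "t \<ge> 1 \<or> t \<le> -1" by auto
    then show False
    proof
      assume "t \<ge> 1" then have "int m * t \<ge> int m" by (rule a)
      with h t show False by linarith
    next
      assume "t \<le> -1" then have "int m * t \<le> - int m" by (rule b)
      with h t show False by linarith
    qed
  qed
  then show "j = 0" using t by simp
qed simp

lemma dvd_mid: assumes "0 < j" "j < 2 * int m" shows "(int m dvd j \<longleftrightarrow> j = int m)"
proof
  assume "int m dvd j" then obtain t where t: "j = int m * t" by auto
  with assms have "0 < t" "t < 2" by (auto simp: zero_less_mult_iff)
  then have "t = 1" by auto
  with t show "j = int m" by simp
qed simp

lemma single_sum: assumes "m = 2 * h + 1" "a \<in> {1..h}"
  shows "(\<Sum>k\<in>{1..h}. ck m (int a) k) = -1"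
proof -
  have "\<not> int m dvd int a" using assms dvd_small[of m "int a"] by auto
  then show ?thesis using ck_sum[OF assms(1)] by simp
qed

lemma pair_sum: assumes "m = 2 * h + 1" "a \<in> {1..h}" "b \<in> {1..h}"
  shows "(\<Sum>k\<in>{1..h}. ck m (int a) k * ck m (int b) k) = of_nat m * of_bool (a = b) - 2"
proof -
  have 1: "\<not> int m dvd (int a + int b)" using assms dvd_mid[of "int a + int b" m] by auto
  have 2: "int m dvd (int a - int b) \<longleftrightarrow> a = b" using assms dvd_small[of m "int a - int b"] by auto
  have "(\<Sum>k\<in>{1..h}. ck m (int a) k * ck m (int b) k) = (\<Sum>k\<in>{1..h}. ck m (int a + int b) k) + (\<Sum>k\<in>{1..h}. ck m (int a - int b) k)"
    by (simp only: ck_mult sum.distrib)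
  also have "\<dots> = (if int m dvd (int a + int b) then of_nat m - 1 else -1) + (if int m dvd (int a - int b) then of_nat m - 1 else -1)"
    by (simp only: ck_sum[OF assms(1)])
  finally show ?thesis using 1 2 by simp
qed

lemma triple_sum: assumes "m = 2 * h + 1" "a \<in> {1..h}" "b \<in> {1..h}" "c \<in> {1..h}"
  shows "(\<Sum>k\<in>{1..h}. ck m (int a) k * ck m (int b) k * ck m (int c) k) =
     of_nat m * (of_bool (a + b + c = m) + of_bool (a + b = c) + of_bool (a + c = b) + of_bool (b + c = a)) - 4"
proof -
  have 1: "int m dvd (int a + int b + int c) \<longleftrightarrow> a + b + c = m" using assms dvd_mid[of "int a + int b + int c" m] by auto
  have 2: "int m dvd (int a + int b - int c) \<longleftrightarrow> a + b = c" using assms dvd_small[of m "int a + int b - int c"] by auto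
  have 3: "int m dvd (int a - int b + int c) \<longleftrightarrow> a + c = b" using assms dvd_small[of m "int a - int b + int c"] by auto
  have 4: "int m dvd (int a - int b - int c) \<longleftrightarrow> b + c = a" using assms dvd_small[of m "int a - int b - int c"] by auto
  have "(\<Sum>k\<in>{1..h}. ck m (int a) k * ck m (int b) k * ck m (int c) k) =
     (\<Sum>k\<in>{1..h}. ck m (int a + int b + int c) k) + (\<Sum>k\<in>{1..h}. ck m (int a + int b - int c) k)
   + ((\<Sum>k\<in>{1..h}. ck m (int a - int b + int c) k) + (\<Sum>k\<in>{1..h}. ck m (int a - int b - int c) k))"
    by (simp only: ck_mult sum.distrib distrib_right)
  also have "\<dots> = (if int m dvd (int a + int b + int c) then of_nat m - 1 else -1) + (if int m dvd (int a + int b - int c) then of_nat m - 1 else -1)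
     + ((if int m dvd (int a - int b + int c) then of_nat m - 1 else -1) + (if int m dvd (int a - int b - int c) then of_nat m - 1 else -1))"
    by (simp only: ck_sum[OF assms(1)])
  finally show ?thesis using 1 2 3 4 by (simp add: algebra_simps)
qed


lemma gen_sum:
  fixes p1 p2 p3 b1 b2 b3 :: complex
  assumes m: "m = 2 * h + 1"
    and r1: "b1 \<noteq> 0 \<Longrightarrow> a1 \<in> {1..h}" and r2: "b2 \<noteq> 0 \<Longrightarrow> a2 \<in> {1..h}" and r3: "b3 \<noteq> 0 \<Longrightarrow> a3 \<in> {1..h}"
  shows "(\<Sum>k\<in>{1..h}. (p1 + b1 * ck m (int a1) k) * (p2 + b2 * ck m (int a2) k) * (p3 + b3 * ck m (int a3) k)) =
     p1 * p2 * p3 * of_nat h - (p1 * p2 * b3 + p1 * b2 * p3 + b1 * p2 * p3)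
     + p1 * b2 * b3 * (of_nat m * of_bool (a2 = a3) - 2)
     + b1 * p2 * b3 * (of_nat m * of_bool (a1 = a3) - 2)
     + b1 * b2 * p3 * (of_nat m * of_bool (a1 = a2) - 2)
     + b1 * b2 * b3 * (of_nat m * (of_bool (a1 + a2 + a3 = m) + of_bool (a1 + a2 = a3) + of_bool (a1 + a3 = a2) + of_bool (a2 + a3 = a1)) - 4)"
proof -
  let ?X = "\<lambda>a k. ck m (int a) k"
  have q1: "b1 \<noteq> 0 \<longrightarrow> a1 \<in> {1..h}" "b2 \<noteq> 0 \<longrightarrow> a2 \<in> {1..h}" "b3 \<noteq> 0 \<longrightarrow> a3 \<in> {1..h}"
    using r1 r2 r3 by blast+
  have s1: "b * (\<Sum>k\<in>{1..h}. ?X a k) = b * (-1)" if "b \<noteq> 0 \<longrightarrow> a \<in> {1..h}" for b :: complex and a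
    using that single_sum[OF m, of a] by (cases "b = 0") auto
  have s2: "b * b' * (\<Sum>k\<in>{1..h}. ?X a k * ?X a' k) = b * b' * (of_nat m * of_bool (a = a') - 2)"
    if "b \<noteq> 0 \<longrightarrow> a \<in> {1..h}" "b' \<noteq> 0 \<longrightarrow> a' \<in> {1..h}" for b b' :: complex and a a'
    using that pair_sum[OF m, of a a'] by (cases "b = 0"; cases "b' = 0") auto
  have s3: "b1 * b2 * b3 * (\<Sum>k\<in>{1..h}. ?X a1 k * ?X a2 k * ?X a3 k) = b1 * b2 * b3 * (of_nat m * (of_bool (a1 + a2 + a3 = m) + of_bool (a1 + a2 = a3) + of_bool (a1 + a3 = a2) + of_bool (a2 + a3 = a1)) - 4)"
    using r1 r2 r3 triple_sum[OF m, of a1 a2 a3] by (cases "b1 = 0"; cases "b2 = 0"; cases "b3 = 0") auto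
  have e: "(p1 + b1 * ?X a1 k) * (p2 + b2 * ?X a2 k) * (p3 + b3 * ?X a3 k) =
     p1 * p2 * p3 + p1 * p2 * b3 * ?X a3 k + p1 * b2 * p3 * ?X a2 k + b1 * p2 * p3 * ?X a1 k
     + p1 * (b2 * b3) * (?X a2 k * ?X a3 k) + p2 * (b1 * b3) * (?X a1 k * ?X a3 k) + p3 * (b1 * b2) * (?X a1 k * ?X a2 k)
     + b1 * b2 * b3 * (?X a1 k * ?X a2 k * ?X a3 k)" for k
    by (simp add: algebra_simps)
  have "(\<Sum>k\<in>{1..h}. (p1 + b1 * ?X a1 k) * (p2 + b2 * ?X a2 k) * (p3 + b3 * ?X a3 k)) =
     p1 * p2 * p3 * of_nat h + p1 * p2 * (b3 * (\<Sum>k\<in>{1..h}. ?X a3 k)) + p1 * p3 * (b2 * (\<Sum>k\<in>{1..h}. ?X a2 k)) + p2 * p3 * (b1 * (\<Sum>k\<in>{1..h}. ?X a1 k))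
     + p1 * (b2 * b3 * (\<Sum>k\<in>{1..h}. ?X a2 k * ?X a3 k)) + p2 * (b1 * b3 * (\<Sum>k\<in>{1..h}. ?X a1 k * ?X a3 k)) + p3 * (b1 * b2 * (\<Sum>k\<in>{1..h}. ?X a1 k * ?X a2 k))
     + b1 * b2 * b3 * (\<Sum>k\<in>{1..h}. ?X a1 k * ?X a2 k * ?X a3 k)"
    unfolding e by (simp add: sum.distrib sum_distrib_left[symmetric] algebra_simps)
  also have "\<dots> = p1 * p2 * p3 * of_nat h + p1 * p2 * (b3 * (-1)) + p1 * p3 * (b2 * (-1)) + p2 * p3 * (b1 * (-1))
     + p1 * (b2 * b3 * (of_nat m * of_bool (a2 = a3) - 2)) + p2 * (b1 * b3 * (of_nat m * of_bool (a1 = a3) - 2)) + p3 * (b1 * b2 * (of_nat m * of_bool (a1 = a2) - 2))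
     + b1 * b2 * b3 * (of_nat m * (of_bool (a1 + a2 + a3 = m) + of_bool (a1 + a2 = a3) + of_bool (a1 + a3 = a2) + of_bool (a2 + a3 = a1)) - 4)"
    by (simp only: s1[OF q1(1)] s1[OF q1(2)] s1[OF q1(3)] s2[OF q1(2) q1(3)] s2[OF q1(1) q1(3)] s2[OF q1(1) q1(2)] s3)
  finally show ?thesis by (simp add: algebra_simps)
qed


definition aA :: "lbl \<Rightarrow> complex" where "aA x = (case x of One \<Rightarrow> 1 | Xm c \<Rightarrow> 0 | Xq \<Rightarrow> 1 | Xp c \<Rightarrow> 0)"
definition bA :: "lbl \<Rightarrow> complex" where "bA x = (case x of One \<Rightarrow> 0 | Xm c \<Rightarrow> 0 | Xq \<Rightarrow> 0 | Xp c \<Rightarrow> 1)"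
definition aB :: "lbl \<Rightarrow> complex" where "aB x = (case x of One \<Rightarrow> 1 | Xm c \<Rightarrow> 0 | Xq \<Rightarrow> -1 | Xp c \<Rightarrow> 0)"
definition bB :: "lbl \<Rightarrow> complex" where "bB x = (case x of One \<Rightarrow> 0 | Xm c \<Rightarrow> -1 | Xq \<Rightarrow> 0 | Xp c \<Rightarrow> 0)"
definition ix :: "lbl \<Rightarrow> nat" where "ix x = (case x of One \<Rightarrow> 1 | Xm c \<Rightarrow> c | Xq \<Rightarrow> 1 | Xp c \<Rightarrow> c)"

lemma ck_of_zeta: "zeta m ^ (k * c) + inverse (zeta m ^ (k * c)) = ck m (int c) k"
  unfolding ck_def zeta_pow E_minus by (simp add: mult.commute)

lemma lam_A: "lam q x (A k) = aA x + bA x * ck (q - 1) (int (ix x)) k"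
  by (cases x) (simp_all add: aA_def bA_def ix_def ck_of_zeta)

lemma lam_B: "lam q x (B k) = aB x + bB x * ck (q + 1) (int (ix x)) k"
  by (cases x) (simp_all add: aB_def bB_def ix_def ck_of_zeta)

lemma lam_real: "cnj (lam q x s) = lam q x s"
proof (cases s)
  case (A k) then show ?thesis by (cases x) (simp_all add: ck_of_zeta ck_cnj)
next
  case (B k) then show ?thesis by (cases x) (simp_all add: ck_of_zeta ck_cnj)
qed (cases x; simp)+

lemma normsq_real: "cnj z = z \<Longrightarrow> complex_of_real ((cmod z)\<^sup>2) = z\<^sup>2"
  using complex_norm_square[of z] by (simp add: power2_eq_square)

lemma basis_eq: "basis q = insert One (insert Xq (Xm ` {1..q div 2} \<union> Xp ` {1..(q - 2) div 2}))"
  unfolding basis_def by auto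

lemma sum_basis: "(\<Sum>z\<in>basis q. g z) = g One + g Xq + (\<Sum>c\<in>{1..q div 2}. g (Xm c)) + (\<Sum>c\<in>{1..(q - 2) div 2}. g (Xp c))"
proof -
  have d: "Xm ` {1..q div 2} \<inter> Xp ` {1..(q - 2) div 2} = {}" by auto
  have "(\<Sum>z\<in>Xm ` {1..q div 2} \<union> Xp ` {1..(q - 2) div 2}. g z) = (\<Sum>z\<in>Xm ` {1..q div 2}. g z) + (\<Sum>z\<in>Xp ` {1..(q - 2) div 2}. g z)"
    by (rule sum.union_disjoint) (use d in auto)
  also have "\<dots> = (\<Sum>c\<in>{1..q div 2}. g (Xm c)) + (\<Sum>c\<in>{1..(q - 2) div 2}. g (Xp c))"
    by (simp add: sum.reindex inj_on_def)
  moreover have "(\<Sum>z\<in>basis q. g z) = g One + (g Xq + (\<Sum>z\<in>Xm ` {1..q div 2} \<union> Xp ` {1..(q - 2) div 2}. g z))"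
    unfolding basis_eq by (subst sum.insert, force, force, subst sum.insert, force, force, rule refl)
  ultimately show ?thesis by (simp add: add.assoc)
qed

lemma cols_eq: "cols q = insert C0 (insert C1 (A ` {1..(q - 2) div 2} \<union> B ` {1..q div 2}))"
  unfolding cols_def by auto

lemma sum_cols: "(\<Sum>s\<in>cols q. g s) = g C0 + g C1 + (\<Sum>k\<in>{1..(q - 2) div 2}. g (A k)) + (\<Sum>k\<in>{1..q div 2}. g (B k))"
proof -
  have d: "A ` {1..(q - 2) div 2} \<inter> B ` {1..q div 2} = {}" by auto
  have "(\<Sum>z\<in>A ` {1..(q - 2) div 2} \<union> B ` {1..q div 2}. g z) = (\<Sum>z\<in>A ` {1..(q - 2) div 2}. g z) + (\<Sum>z\<in>B ` {1..q div 2}. g z)"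
    by (rule sum.union_disjoint) (use d in auto)
  also have "\<dots> = (\<Sum>k\<in>{1..(q - 2) div 2}. g (A k)) + (\<Sum>k\<in>{1..q div 2}. g (B k))"
    by (simp add: sum.reindex inj_on_def)
  moreover have "(\<Sum>s\<in>cols q. g s) = g C0 + (g C1 + (\<Sum>z\<in>A ` {1..(q - 2) div 2} \<union> B ` {1..q div 2}. g z))"
    unfolding cols_eq by (subst sum.insert, force, force, subst sum.insert, force, force, rule refl)
  ultimately show ?thesis by (simp add: add.assoc)
qed

lemma card_basis: "card (basis q) = 2 + q div 2 + (q - 2) div 2"
proof -
  have "card (basis q) = (\<Sum>z\<in>basis q. 1::nat)" by simp
  also have "\<dots> = 2 + q div 2 + (q - 2) div 2" by (simp only: sum_basis) simp
  finally show ?thesis .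
qed


lemma ck_swap: "ck m (int a) b = ck m (int b) a"
  unfolding ck_def by (simp add: mult.commute)

lemma colnorm_sq: "colnorm q s = (\<Sum>x\<in>basis q. (lam q x s)\<^sup>2)"
  unfolding colnorm_def by (rule sum.cong[OF refl], rule normsq_real, rule lam_real)

definition GS :: "nat \<Rightarrow> nat \<Rightarrow> complex \<Rightarrow> complex \<Rightarrow> nat \<Rightarrow> complex \<Rightarrow> complex \<Rightarrow> nat \<Rightarrow> complex \<Rightarrow> complex \<Rightarrow> nat \<Rightarrow> complex" where
  "GS m h p1 b1 a1 p2 b2 a2 p3 b3 a3 =
     p1 * p2 * p3 * of_nat h - (p1 * p2 * b3 + p1 * b2 * p3 + b1 * p2 * p3)
     + p1 * b2 * b3 * (of_nat m * of_bool (a2 = a3) - 2)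
     + b1 * p2 * b3 * (of_nat m * of_bool (a1 = a3) - 2)
     + b1 * b2 * p3 * (of_nat m * of_bool (a1 = a2) - 2)
     + b1 * b2 * b3 * (of_nat m * (of_bool (a1 + a2 + a3 = m) + of_bool (a1 + a2 = a3) + of_bool (a1 + a3 = a2) + of_bool (a2 + a3 = a1)) - 4)"

locale qh =
  fixes q h :: nat
  assumes qh: "q = 2 * h" and h1: "1 \<le> h"
begin

lemma qdiv: "q div 2 = h" "(q - 2) div 2 = h - 1" using qh h1 by auto

lemma ofq: "(of_nat h :: complex) = of_nat q / 2" "(of_nat (h - 1) :: complex) = of_nat q / 2 - 1"
   "(of_nat (q - 1) :: complex) = of_nat q - 1"
  using qh h1 by (simp_all add: of_nat_diff)

lemma nz: "(of_nat q :: complex) \<noteq> 0" "(of_nat q :: complex) - 1 \<noteq> 0" "(of_nat q :: complex) + 1 \<noteq> 0"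
  "(of_nat q :: complex)\<^sup>2 - 1 \<noteq> 0"
proof -
  have q2: "q \<ge> 2" using qh h1 by simp
  have e1: "(of_nat q :: complex) - 1 = of_nat (q - 1)" using q2 by (simp add: of_nat_diff)
  have e2: "(of_nat q :: complex) + 1 = of_nat (q + 1)" by simp
  have a1: "(of_nat q :: complex) \<noteq> 0" using q2 by simp
  have a2: "(of_nat q :: complex) - 1 \<noteq> 0" unfolding e1 using q2 by simp
  have a3: "(of_nat q :: complex) + 1 \<noteq> 0" unfolding e2 by (simp only: of_nat_eq_0_iff)
  show "(of_nat q :: complex) \<noteq> 0" "(of_nat q :: complex) - 1 \<noteq> 0" "(of_nat q :: complex) + 1 \<noteq> 0"
    using a1 a2 a3 by auto
  have "(of_nat q :: complex)\<^sup>2 - 1 = (of_nat q - 1) * (of_nat q + 1)" by (simp add: algebra_simps power2_eq_square)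
  then show "(of_nat q :: complex)\<^sup>2 - 1 \<noteq> 0" using a2 a3 by simp
qed

lemma colnorm_C0: "colnorm q C0 = of_nat q * ((of_nat q)\<^sup>2 - 1)"
  unfolding colnorm_sq sum_basis qdiv using h1
  by (simp add: ofq of_nat_diff field_simps power2_eq_square)

lemma colnorm_C1: "colnorm q C1 = of_nat q"
  unfolding colnorm_sq sum_basis qdiv using h1 qh
  by (simp add: of_nat_diff)

lemma colnorm_A: assumes "k \<in> {1..h - 1}" shows "colnorm q (A k) = of_nat q - 1"
proof -
  have m: "q - 1 = 2 * (h - 1) + 1" using qh h1 by simp
  have "(\<Sum>c\<in>{1..h - 1}. (lam q (Xp c) (A k))\<^sup>2) = (\<Sum>c\<in>{1..h - 1}. ck (q - 1) (int k) c * ck (q - 1) (int k) c)"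
    by (simp add: lam_A aA_def bA_def ix_def ck_swap power2_eq_square)
  also have "\<dots> = of_nat (q - 1) - 2" using pair_sum[OF m assms assms] by simp
  moreover have "q \<ge> 2" using qh h1 by simp
  ultimately show ?thesis unfolding colnorm_sq sum_basis qdiv using h1
    by (simp add: ofq of_nat_diff)
qed

lemma colnorm_B: assumes "k \<in> {1..h}" shows "colnorm q (B k) = of_nat q + 1"
proof -
  have m: "q + 1 = 2 * h + 1" using qh h1 by simp
  have "(\<Sum>c\<in>{1..h}. (lam q (Xm c) (B k))\<^sup>2) = (\<Sum>c\<in>{1..h}. ck (q + 1) (int k) c * ck (q + 1) (int k) c)"
    by (simp add: lam_B aB_def bB_def ix_def ck_swap power2_eq_square)
  also have "\<dots> = of_nat (q + 1) - 2" using pair_sum[OF m assms assms] by simp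
  moreover have "q \<ge> 2" using qh h1 by simp
  ultimately show ?thesis unfolding colnorm_sq sum_basis qdiv using h1
    by (simp add: ofq of_nat_diff)
qed

lemma rangeA: "x \<in> basis q \<Longrightarrow> bA x \<noteq> 0 \<longrightarrow> ix x \<in> {1..h - 1}"
  unfolding basis_def qdiv by (auto simp: bA_def ix_def)

lemma rangeB: "x \<in> basis q \<Longrightarrow> bB x \<noteq> 0 \<longrightarrow> ix x \<in> {1..h}"
  unfolding basis_def qdiv by (auto simp: bB_def ix_def)

lemma fus_closed:
  assumes x: "x \<in> basis q" and y: "y \<in> basis q" and z: "z \<in> basis q"
  shows "fus q x y z = lam q x C0 * lam q y C0 * lam q z C0 / (of_nat q * ((of_nat q)\<^sup>2 - 1))
     + lam q x C1 * lam q y C1 * lam q z C1 / of_nat q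
     + GS (q - 1) (h - 1) (aA x) (bA x) (ix x) (aA y) (bA y) (ix y) (aA z) (bA z) (ix z) / (of_nat q - 1)
     + GS (q + 1) h (aB x) (bB x) (ix x) (aB y) (bB y) (ix y) (aB z) (bB z) (ix z) / (of_nat q + 1)"
proof -
  have mA: "q - 1 = 2 * (h - 1) + 1" using qh h1 by simp
  have mB: "q + 1 = 2 * h + 1" using qh h1 by simp
  have SA: "(\<Sum>k\<in>{1..h - 1}. lam q x (A k) * lam q y (A k) * lam q z (A k) / colnorm q (A k))
      = GS (q - 1) (h - 1) (aA x) (bA x) (ix x) (aA y) (bA y) (ix y) (aA z) (bA z) (ix z) / (of_nat q - 1)"
  proof -
    have "(\<Sum>k\<in>{1..h - 1}. lam q x (A k) * lam q y (A k) * lam q z (A k) / colnorm q (A k))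
       = (\<Sum>k\<in>{1..h - 1}. lam q x (A k) * lam q y (A k) * lam q z (A k)) / (of_nat q - 1)"
      unfolding sum_divide_distrib by (rule sum.cong) (simp_all add: colnorm_A)
    also have "(\<Sum>k\<in>{1..h - 1}. lam q x (A k) * lam q y (A k) * lam q z (A k))
       = GS (q - 1) (h - 1) (aA x) (bA x) (ix x) (aA y) (bA y) (ix y) (aA z) (bA z) (ix z)"
      unfolding lam_A GS_def by (rule gen_sum[OF mA rangeA[OF x, rule_format] rangeA[OF y, rule_format] rangeA[OF z, rule_format]])
    finally show ?thesis .
  qed
  have SB: "(\<Sum>k\<in>{1..h}. lam q x (B k) * lam q y (B k) * lam q z (B k) / colnorm q (B k))
      = GS (q + 1) h (aB x) (bB x) (ix x) (aB y) (bB y) (ix y) (aB z) (bB z) (ix z) / (of_nat q + 1)"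
  proof -
    have "(\<Sum>k\<in>{1..h}. lam q x (B k) * lam q y (B k) * lam q z (B k) / colnorm q (B k))
       = (\<Sum>k\<in>{1..h}. lam q x (B k) * lam q y (B k) * lam q z (B k)) / (of_nat q + 1)"
      unfolding sum_divide_distrib by (rule sum.cong) (simp_all add: colnorm_B)
    also have "(\<Sum>k\<in>{1..h}. lam q x (B k) * lam q y (B k) * lam q z (B k))
       = GS (q + 1) h (aB x) (bB x) (ix x) (aB y) (bB y) (ix y) (aB z) (bB z) (ix z)"
      unfolding lam_B GS_def by (rule gen_sum[OF mB rangeB[OF x, rule_format] rangeB[OF y, rule_format] rangeB[OF z, rule_format]])
    finally show ?thesis .
  qed
  show ?thesis unfolding fus_def lam_real sum_cols qdiv SA SB colnorm_C0 colnorm_C1 by simp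
qed

lemma fus_mult:
  assumes x: "x \<in> basis q" and y: "y \<in> basis q" and z: "z \<in> basis q"
  shows "of_nat q * (of_nat q - 1) * (of_nat q + 1) * fus q x y z = lam q x C0 * lam q y C0 * lam q z C0
     + (of_nat q - 1) * (of_nat q + 1) * (lam q x C1 * lam q y C1 * lam q z C1)
     + of_nat q * (of_nat q + 1) * GS (q - 1) (h - 1) (aA x) (bA x) (ix x) (aA y) (bA y) (ix y) (aA z) (bA z) (ix z)
     + of_nat q * (of_nat q - 1) * GS (q + 1) h (aB x) (bB x) (ix x) (aB y) (bB y) (ix y) (aB z) (bB z) (ix z)"
proof -
  have sq: "(of_nat q :: complex)\<^sup>2 - 1 = (of_nat q - 1) * (of_nat q + 1)" by (simp add: algebra_simps power2_eq_square)
  have gen: "Q * (Q - 1) * (Q + 1) * (a / (Q * ((Q - 1) * (Q + 1))) + b / Q + c / (Q - 1) + d / (Q + 1))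
     = a + (Q - 1) * (Q + 1) * b + Q * (Q + 1) * c + Q * (Q - 1) * d"
    if "Q \<noteq> 0" "Q - 1 \<noteq> 0" "Q + 1 \<noteq> 0" for Q a b c d :: complex
  proof -
    have 1: "Q * (Q - 1) * (Q + 1) * (a / (Q * ((Q - 1) * (Q + 1)))) = a" using that by (simp add: mult.assoc)
    have 2: "Q * (Q - 1) * (Q + 1) * (b / Q) = (Q - 1) * (Q + 1) * b" using that by (simp add: mult.assoc mult.commute)
    have 3: "Q * (Q - 1) * (Q + 1) * (c / (Q - 1)) = Q * (Q + 1) * c" using that by (simp add: mult.commute mult.left_commute)
    have 4: "Q * (Q - 1) * (Q + 1) * (d / (Q + 1)) = Q * (Q - 1) * d" using that by (simp add: mult.commute mult.left_commute)
    have dl: "D * (w + x + y + v) = D * w + D * x + D * y + D * v" for D w x y v :: complex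
      by (simp add: distrib_left)
    show ?thesis unfolding dl 1 2 3 4 ..
  qed
  show ?thesis unfolding fus_closed[OF x y z] sq
    by (rule gen[OF nz(1) nz(2) nz(3)])
qed

lemma cancelD: "(D::complex) \<noteq> 0 \<Longrightarrow> D * f = P \<Longrightarrow> P = D * t \<Longrightarrow> f = t"
  by simp

lemma Dnz: "(of_nat q :: complex) * (of_nat q - 1) * (of_nat q + 1) \<noteq> 0"
  using nz by simp

lemma ofh: "(of_nat q :: complex) = 2 * of_nat h" "(of_nat (h - 1) :: complex) = of_nat h - 1"
   "(of_nat (q - 1) :: complex) = 2 * of_nat h - 1" "(of_nat (q + 1) :: complex) = 2 * of_nat h + 1"
   "(of_nat (h - Suc 0) :: complex) = of_nat h - 1" "(of_nat (q - Suc 0) :: complex) = 2 * of_nat h - 1"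
  using qh h1 by (simp_all add: of_nat_diff)

end



lemma cnt: fixes a b c m :: nat
  assumes "odd m" "1 \<le> a" "1 \<le> b" "1 \<le> c"
  shows "(of_bool (a + b + c = m) + of_bool (a + b = c) + of_bool (a + c = b) + of_bool (b + c = a) :: complex)
     = of_bool (a + b + c \<in> {m, 2 * max a (max b c)})"
  using assms unfolding max_def by (auto; presburger)

context qh begin

lemma mm:
  assumes c1: "c1 \<in> {1..h}" and c2: "c2 \<in> {1..h}" and z: "z \<in> basis q"
  shows "fus q (Xm c1) (Xm c2) z = of_nat (case z of
           One \<Rightarrow> (if c1 = c2 then 1 else 0)
         | Xm c3 \<Rightarrow> (if c1 + c2 + c3 \<notin> {q + 1, 2 * max c1 (max c2 c3)} then 1 else 0)
         | Xq \<Rightarrow> (if c1 = c2 then 0 else 1)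
         | Xp c3 \<Rightarrow> 1)"
proof -
  have x: "Xm c1 \<in> basis q" "Xm c2 \<in> basis q" using c1 c2 qdiv unfolding basis_def by auto
  note F = cancelD[OF Dnz fus_mult[OF x z]]
  have oq: "odd (q + 1)" "odd (q - 1)" using qh h1 by auto
  have q2: "q \<ge> 2" using qh h1 by simp
  consider "z = One" | c3 where "z = Xm c3" "c3 \<in> {1..h}" | "z = Xq" | c3 where "z = Xp c3" "c3 \<in> {1..h - 1}"
    using z unfolding basis_def qdiv by auto
  then show ?thesis
  proof cases
    case 1
    then show ?thesis using c1 c2 q2
      by (intro F; cases "c1 = c2") (simp_all add: GS_def aA_def bA_def aB_def bB_def ix_def of_nat_diff ofh algebra_simps)
  next
    case 2
    have cn: "(of_bool (c1 + c2 + c3 = q + 1) + of_bool (c1 + c2 = c3) + of_bool (c1 + c3 = c2) + of_bool (c2 + c3 = c1) :: complex)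
     = of_bool (c1 + c2 + c3 \<in> {q + 1, 2 * max c1 (max c2 c3)})"
      using cnt[OF oq(1), of c1 c2 c3] c1 c2 2 by simp
    show ?thesis using c1 c2 2 q2
      apply (intro F)
      unfolding 2(1) GS_def aA_def bA_def aB_def bB_def ix_def lbl.case cn
      apply (cases "c1 + c2 + c3 \<in> {q + 1, 2 * max c1 (max c2 c3)}")
      apply (simp_all add: of_nat_diff ofh algebra_simps)
      done
  next
    case 3
    then show ?thesis using c1 c2 q2
      by (intro F; cases "c1 = c2") (simp_all add: GS_def aA_def bA_def aB_def bB_def ix_def of_nat_diff ofh algebra_simps)
  next
    case 4
    then show ?thesis using c1 c2 q2
      by (intro F) (simp_all add: GS_def aA_def bA_def aB_def bB_def ix_def of_nat_diff ofh algebra_simps)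
  qed
qed

lemma zcases:
  assumes "z \<in> basis q"
  obtains "z = One" | c3 where "z = Xm c3" "c3 \<in> {1..h}" | "z = Xq" | c3 where "z = Xp c3" "c3 \<in> {1..h - 1}"
  using assms unfolding basis_def qdiv by auto

lemma mq:
  assumes c1: "c1 \<in> {1..h}" and z: "z \<in> basis q"
  shows "fus q (Xm c1) Xq z = of_nat (case z of
           One \<Rightarrow> 0
         | Xm c2 \<Rightarrow> (if c1 = c2 then 0 else 1)
         | Xq \<Rightarrow> 1
         | Xp c2 \<Rightarrow> 1)"
proof -
  have x: "Xm c1 \<in> basis q" "Xq \<in> basis q" using c1 qdiv unfolding basis_def by auto
  note F = cancelD[OF Dnz fus_mult[OF x z]]
  have q2: "q \<ge> 2" using qh h1 by simp
  show ?thesis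
  proof (cases rule: zcases[OF z])
    case 1 then show ?thesis using c1 q2 by (intro F) (simp_all add: GS_def aA_def bA_def aB_def bB_def ix_def of_nat_diff ofh algebra_simps)
  next
    case (2 c3) then show ?thesis using c1 q2 by (intro F; cases "c1 = c3") (simp_all add: GS_def aA_def bA_def aB_def bB_def ix_def of_nat_diff ofh algebra_simps)
  next
    case 3 then show ?thesis using c1 q2 by (intro F) (simp_all add: GS_def aA_def bA_def aB_def bB_def ix_def of_nat_diff ofh algebra_simps)
  next
    case (4 c3) then show ?thesis using c1 q2 by (intro F) (simp_all add: GS_def aA_def bA_def aB_def bB_def ix_def of_nat_diff ofh algebra_simps)
  qed
qed

lemma mp:
  assumes c1: "c1 \<in> {1..h}" and c2: "c2 \<in> {1..h - 1}" and z: "z \<in> basis q"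
  shows "fus q (Xm c1) (Xp c2) z = of_nat (case z of
           One \<Rightarrow> 0
         | Xm c3 \<Rightarrow> 1
         | Xq \<Rightarrow> 1
         | Xp c3 \<Rightarrow> 1)"
proof -
  have x: "Xm c1 \<in> basis q" "Xp c2 \<in> basis q" using c1 c2 qdiv unfolding basis_def by auto
  note F = cancelD[OF Dnz fus_mult[OF x z]]
  have q2: "q \<ge> 2" using qh h1 by simp
  show ?thesis
  proof (cases rule: zcases[OF z])
    case 1 then show ?thesis using c1 c2 q2 by (intro F) (simp_all add: GS_def aA_def bA_def aB_def bB_def ix_def of_nat_diff ofh algebra_simps)
  next
    case (2 c3) then show ?thesis using c1 c2 q2 by (intro F) (simp_all add: GS_def aA_def bA_def aB_def bB_def ix_def of_nat_diff ofh algebra_simps)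
  next
    case 3 then show ?thesis using c1 c2 q2 by (intro F) (simp_all add: GS_def aA_def bA_def aB_def bB_def ix_def of_nat_diff ofh algebra_simps)
  next
    case (4 c3) then show ?thesis using c1 c2 q2 by (intro F) (simp_all add: GS_def aA_def bA_def aB_def bB_def ix_def of_nat_diff ofh algebra_simps)
  qed
qed

lemma qq:
  assumes z: "z \<in> basis q"
  shows "fus q Xq Xq z = 1"
proof -
  have x: "Xq \<in> basis q" unfolding basis_def by auto
  note F = cancelD[OF Dnz fus_mult[OF x x z]]
  have q2: "q \<ge> 2" using qh h1 by simp
  show ?thesis
  proof (cases rule: zcases[OF z])
    case 1 then show ?thesis using q2 by (intro F) (simp_all add: GS_def aA_def bA_def aB_def bB_def ix_def of_nat_diff ofh algebra_simps)
  next
    case (2 c3) then show ?thesis using q2 by (intro F) (simp_all add: GS_def aA_def bA_def aB_def bB_def ix_def of_nat_diff ofh algebra_simps)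
  next
    case 3 then show ?thesis using q2 by (intro F) (simp_all add: GS_def aA_def bA_def aB_def bB_def ix_def of_nat_diff ofh algebra_simps)
  next
    case (4 c3) then show ?thesis using q2 by (intro F) (simp_all add: GS_def aA_def bA_def aB_def bB_def ix_def of_nat_diff ofh algebra_simps)
  qed
qed

lemma qp:
  assumes c1: "c1 \<in> {1..h - 1}" and z: "z \<in> basis q"
  shows "fus q Xq (Xp c1) z = of_nat (case z of
           One \<Rightarrow> 0
         | Xm c2 \<Rightarrow> 1
         | Xq \<Rightarrow> 1
         | Xp c2 \<Rightarrow> 1 + (if c1 = c2 then 1 else 0))"
proof -
  have x: "Xq \<in> basis q" "Xp c1 \<in> basis q" using c1 qdiv unfolding basis_def by auto
  note F = cancelD[OF Dnz fus_mult[OF x z]]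
  have q2: "q \<ge> 2" using qh h1 by simp
  show ?thesis
  proof (cases rule: zcases[OF z])
    case 1 then show ?thesis using c1 q2 by (intro F) (simp_all add: GS_def aA_def bA_def aB_def bB_def ix_def of_nat_diff ofh algebra_simps)
  next
    case (2 c3) then show ?thesis using c1 q2 by (intro F) (simp_all add: GS_def aA_def bA_def aB_def bB_def ix_def of_nat_diff ofh algebra_simps)
  next
    case 3 then show ?thesis using c1 q2 by (intro F) (simp_all add: GS_def aA_def bA_def aB_def bB_def ix_def of_nat_diff ofh algebra_simps)
  next
    case (4 c3) then show ?thesis using c1 q2 by (intro F; cases "c1 = c3") (simp_all add: GS_def aA_def bA_def aB_def bB_def ix_def of_nat_diff ofh algebra_simps)
  qed
qed

lemma pp:
  assumes c1: "c1 \<in> {1..h - 1}" and c2: "c2 \<in> {1..h - 1}" and z: "z \<in> basis q"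
  shows "fus q (Xp c1) (Xp c2) z = of_nat (case z of
           One \<Rightarrow> (if c1 = c2 then 1 else 0)
         | Xm c3 \<Rightarrow> 1
         | Xq \<Rightarrow> 1 + (if c1 = c2 then 1 else 0)
         | Xp c3 \<Rightarrow> (if c1 + c2 + c3 \<in> {q - 1, 2 * max c1 (max c2 c3)} then 2 else 1))"
proof -
  have x: "Xp c1 \<in> basis q" "Xp c2 \<in> basis q" using c1 c2 qdiv unfolding basis_def by auto
  note F = cancelD[OF Dnz fus_mult[OF x z]]
  have q2: "q \<ge> 2" using qh h1 by simp
  have oq: "odd (q - 1)" using qh h1 by auto
  show ?thesis
  proof (cases rule: zcases[OF z])
    case 1 then show ?thesis using c1 c2 q2 by (intro F; cases "c1 = c2") (simp_all add: GS_def aA_def bA_def aB_def bB_def ix_def of_nat_diff ofh algebra_simps)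
  next
    case (2 c3) then show ?thesis using c1 c2 q2 by (intro F) (simp_all add: GS_def aA_def bA_def aB_def bB_def ix_def of_nat_diff ofh algebra_simps)
  next
    case 3 then show ?thesis using c1 c2 q2 by (intro F; cases "c1 = c2") (simp_all add: GS_def aA_def bA_def aB_def bB_def ix_def of_nat_diff ofh algebra_simps)
  next
    case (4 c3)
    have cn: "(of_bool (c1 + c2 + c3 = q - 1) + of_bool (c1 + c2 = c3) + of_bool (c1 + c3 = c2) + of_bool (c2 + c3 = c1) :: complex)
     = of_bool (c1 + c2 + c3 \<in> {q - 1, 2 * max c1 (max c2 c3)})"
      using cnt[OF oq, of c1 c2 c3] c1 c2 4 by simp
    show ?thesis using c1 c2 4 q2
      apply (intro F)
      unfolding 4(1) GS_def aA_def bA_def aB_def bB_def ix_def lbl.case cn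
      apply (cases "c1 + c2 + c3 \<in> {q - 1, 2 * max c1 (max c2 c3)}")
      apply (simp_all add: of_nat_diff ofh algebra_simps)
      done
  qed
qed

lemma unit:
  assumes y: "y \<in> basis q" and z: "z \<in> basis q"
  shows "fus q One y z = (if y = z then 1 else 0)"
proof -
  have x: "One \<in> basis q" unfolding basis_def by auto
  note F = cancelD[OF Dnz fus_mult[OF x y z]]
  have q2: "q \<ge> 2" using qh h1 by simp
  show ?thesis
  proof (cases rule: zcases[OF y])
    case 1 then show ?thesis
      by (cases rule: zcases[OF z]) (intro F; simp add: GS_def aA_def bA_def aB_def bB_def ix_def of_nat_diff ofh algebra_simps)+
  next
    case (2 c)
    then show ?thesis
    proof (cases rule: zcases[OF z])
      case (2 c') then show ?thesis using \<open>y = Xm c\<close> by (intro F; cases "c = c'") (simp_all add: GS_def aA_def bA_def aB_def bB_def ix_def of_nat_diff ofh algebra_simps)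
    qed (intro F; simp add: GS_def aA_def bA_def aB_def bB_def ix_def of_nat_diff ofh algebra_simps)+
  next
    case 3 then show ?thesis
      by (cases rule: zcases[OF z]) (intro F; simp add: GS_def aA_def bA_def aB_def bB_def ix_def of_nat_diff ofh algebra_simps)+
  next
    case (4 c)
    then show ?thesis
    proof (cases rule: zcases[OF z])
      case (4 c') then show ?thesis using \<open>y = Xp c\<close> by (intro F; cases "c = c'") (simp_all add: GS_def aA_def bA_def aB_def bB_def ix_def of_nat_diff ofh algebra_simps)
    qed (intro F; simp add: GS_def aA_def bA_def aB_def bB_def ix_def of_nat_diff ofh algebra_simps)+
  qed
qed

end


lemma fus_comm: "fus q x y z = fus q y x z"
  unfolding fus_def by (simp add: mult.commute mult.left_commute)

lemma sum_delta_minus: "finite S \<Longrightarrow> c1 \<in> S \<Longrightarrow>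
   (\<Sum>c\<in>S. (of_nat (if c1 = c then 0 else 1) :: complex) * g c) = sum g S - g c1"
proof -
  assume "finite S" "c1 \<in> S"
  have "(\<Sum>c\<in>S. (of_nat (if c1 = c then 0 else 1) :: complex) * g c) = (\<Sum>c\<in>S. g c - (if c1 = c then g c else 0))"
    by (rule sum.cong) auto
  also have "\<dots> = sum g S - g c1" using \<open>finite S\<close> \<open>c1 \<in> S\<close> by (simp add: sum_subtractf)
  finally show ?thesis .
qed

lemma sum_delta_plus: "finite S \<Longrightarrow> c1 \<in> S \<Longrightarrow>
   (\<Sum>c\<in>S. (1 + of_nat (if c1 = c then 1 else 0) :: complex) * g c) = sum g S + g c1"
proof -
  assume "finite S" "c1 \<in> S"
  have "(\<Sum>c\<in>S. (1 + of_nat (if c1 = c then 1 else 0) :: complex) * g c) = (\<Sum>c\<in>S. g c + (if c1 = c then g c else 0))"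
    by (rule sum.cong) (auto simp: algebra_simps)
  also have "\<dots> = sum g S + g c1" using \<open>finite S\<close> \<open>c1 \<in> S\<close> by (simp add: sum.distrib)
  finally show ?thesis .
qed

context qh begin

lemma orth: assumes s: "s \<in> cols q"
  shows "(\<Sum>z\<in>basis q. lam q z s * lam q z C0) = (if s = C0 then colnorm q C0 else 0)"
proof -
  have q2: "q \<ge> 2" using qh h1 by simp
  consider "s = C0" | "s = C1" | k where "s = A k" "k \<in> {1..h - 1}" | k where "s = B k" "k \<in> {1..h}"
    using s unfolding cols_def qdiv by auto
  then show ?thesis
  proof cases
    case 1 then show ?thesis by (simp add: colnorm_sq power2_eq_square)
  next
    case 2 then show ?thesis unfolding sum_basis qdiv using h1 by (simp add: ofh of_nat_diff algebra_simps)
  next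
    case (3 k)
    have mA: "q - 1 = 2 * (h - 1) + 1" using qh h1 by simp
    have "(\<Sum>c\<in>{1..h - 1}. lam q (Xp c) (A k) * lam q (Xp c) C0) = (\<Sum>c\<in>{1..h - 1}. ck (q - 1) (int k) c) * (of_nat q + 1)"
      by (simp add: sum_distrib_right lam_A aA_def bA_def ix_def ck_swap)
    also have "\<dots> = - (of_nat q + 1)" using single_sum[OF mA 3(2)] by simp
    finally show ?thesis unfolding sum_basis qdiv using 3 by simp
  next
    case (4 k)
    have mB: "q + 1 = 2 * h + 1" using qh h1 by simp
    have "(\<Sum>c\<in>{1..h}. lam q (Xm c) (B k) * lam q (Xm c) C0) = - (\<Sum>c\<in>{1..h}. ck (q + 1) (int k) c) * (of_nat q - 1)"
      by (simp add: sum_distrib_right lam_B aB_def bB_def ix_def ck_swap sum_negf)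
    also have "\<dots> = of_nat q - 1" using single_sum[OF mB 4(2)] by simp
    finally show ?thesis unfolding sum_basis qdiv using 4 by simp
  qed
qed

definition dd :: "lbl \<Rightarrow> complex" where "dd x = (if x \<in> basis q then lam q x C0 else 0)"

lemma c0nz: "colnorm q C0 \<noteq> 0"
  unfolding colnorm_C0 using nz by simp

lemma dd_hom: assumes x: "x \<in> basis q" and y: "y \<in> basis q"
  shows "dd x * dd y = (\<Sum>z\<in>basis q. fus q x y z * dd z)"
proof -
  have fin: "finite (basis q)" "finite (cols q)" unfolding basis_def cols_def by auto
  have "(\<Sum>z\<in>basis q. fus q x y z * dd z) = (\<Sum>z\<in>basis q. \<Sum>s\<in>cols q. (lam q x s * lam q y s / colnorm q s) * (lam q z s * lam q z C0))"
    unfolding fus_def dd_def lam_real by (rule sum.cong[OF refl]) (simp add: sum_distrib_right mult.assoc)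
  also have "\<dots> = (\<Sum>s\<in>cols q. (lam q x s * lam q y s / colnorm q s) * (\<Sum>z\<in>basis q. lam q z s * lam q z C0))"
    by (subst sum.swap) (simp add: sum_distrib_left)
  also have "\<dots> = (\<Sum>s\<in>cols q. if s = C0 then lam q x C0 * lam q y C0 else 0)"
    by (rule sum.cong[OF refl]) (simp add: orth c0nz)
  also have "\<dots> = lam q x C0 * lam q y C0" using fin by (simp add: cols_def)
  finally show ?thesis using x y by (simp add: dd_def)
qed

lemma dd_pos: "is_pos_hom q dd"
proof -
  have q2: "q \<ge> 2" using qh h1 by simp
  have "\<forall>x\<in>basis q. Im (dd x) = 0 \<and> 0 < Re (dd x)"
  proof
    fix x assume x: "x \<in> basis q"
    show "Im (dd x) = 0 \<and> 0 < Re (dd x)"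
      using q2 by (cases rule: zcases[OF x]) (auto simp: dd_def basis_def qdiv)
  qed
  moreover have "dd One = 1" by (simp add: dd_def basis_def)
  ultimately show ?thesis unfolding is_pos_hom_def using dd_hom by (auto simp: dd_def)
qed

lemma uniq: assumes f: "is_pos_hom q f" shows "f = dd"
proof -
  have f1: "f One = 1" and hom: "\<And>x y. x \<in> basis q \<Longrightarrow> y \<in> basis q \<Longrightarrow> f x * f y = (\<Sum>z\<in>basis q. fus q x y z * f z)"
    and pos: "\<And>x. x \<in> basis q \<Longrightarrow> Im (f x) = 0 \<and> 0 < Re (f x)"
    and off: "\<And>x. x \<notin> basis q \<Longrightarrow> f x = 0"
    using f unfolding is_pos_hom_def by auto
  have bq: "Xq \<in> basis q" "One \<in> basis q" unfolding basis_def by auto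
  have bm: "c \<in> {1..h} \<Longrightarrow> Xm c \<in> basis q" for c unfolding basis_def qdiv by auto
  have bp: "c \<in> {1..h - 1} \<Longrightarrow> Xp c \<in> basis q" for c unfolding basis_def qdiv by auto
  define a where "a = f Xq"
  define Fm where "Fm = (\<Sum>c\<in>{1..h}. f (Xm c))"
  define Fp where "Fp = (\<Sum>c\<in>{1..h - 1}. f (Xp c))"
  have ReFm: "Re Fm \<ge> 0" unfolding Fm_def Re_sum by (rule sum_nonneg) (use pos bm in force)
  have ReFp: "Re Fp \<ge> 0" unfolding Fp_def Re_sum by (rule sum_nonneg) (use pos bp in force)
  have Rea: "Re a > 0" "Im a = 0" unfolding a_def using pos bq by auto
  have "(\<Sum>z\<in>basis q. fus q Xq Xq z * f z) = (\<Sum>z\<in>basis q. f z)"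
    by (rule sum.cong[OF refl]) (simp add: qq)
  then have S: "a * a = 1 + a + Fm + Fp"
    using hom[OF bq(1) bq(1)] unfolding a_def Fm_def Fp_def sum_basis qdiv
    by (simp add: f1)
  have fm: "f (Xm c) = a - 1" if c: "c \<in> {1..h}" for c
  proof -
    have "a * f (Xm c) = (\<Sum>z\<in>basis q. fus q (Xm c) Xq z * f z)"
      using hom[OF bq(1) bm[OF c]] unfolding a_def by (simp add: fus_comm)
    also have "\<dots> = (\<Sum>z\<in>basis q. of_nat (case z of One \<Rightarrow> 0 | Xm c2 \<Rightarrow> (if c = c2 then 0 else 1) | Xq \<Rightarrow> 1 | Xp c2 \<Rightarrow> 1) * f z)"
      by (rule sum.cong[OF refl]) (simp add: mq[OF c])
    also have "\<dots> = a + (Fm - f (Xm c)) + Fp"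
      unfolding sum_basis qdiv a_def Fm_def Fp_def
      using c by (simp add: sum_delta_minus)
    finally have "(a + 1) * f (Xm c) = a * a - 1" using S by (simp add: algebra_simps)
    also have "\<dots> = (a + 1) * (a - 1)" by (simp add: algebra_simps)
    finally show ?thesis using Rea by (metis add_eq_0_iff mult_left_cancel Re_complex_of_real
         minus_complex.simps(1) one_complex.simps(1) less_irrefl neg_less_0_iff_less zero_less_one  less_trans uminus_complex.sel(1) plus_complex.simps(1) zero_complex.simps(1))
  qed
  have a1: "a \<noteq> 1"
  proof
    assume "a = 1"
    then have "Fm + Fp + 1 = 0" using S by (simp add: algebra_simps)
    then have "Re Fm + Re Fp + 1 = 0" by (metis plus_complex.simps(1) one_complex.simps(1) zero_complex.simps(1))
    then show False using ReFm ReFp by linarith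
  qed
  have fp: "f (Xp c) = a + 1" if c: "c \<in> {1..h - 1}" for c
  proof -
    have "a * f (Xp c) = (\<Sum>z\<in>basis q. fus q Xq (Xp c) z * f z)"
      using hom[OF bq(1) bp[OF c]] unfolding a_def by simp
    also have "\<dots> = (\<Sum>z\<in>basis q. of_nat (case z of One \<Rightarrow> 0 | Xm c2 \<Rightarrow> 1 | Xq \<Rightarrow> 1 | Xp c2 \<Rightarrow> 1 + (if c = c2 then 1 else 0)) * f z)"
      by (rule sum.cong[OF refl]) (simp add: qp[OF c])
    also have "\<dots> = Fm + a + (Fp + f (Xp c))"
      unfolding sum_basis qdiv a_def Fm_def Fp_def
      using c by (simp add: sum_delta_plus)
    finally have "(a - 1) * f (Xp c) = a * a - 1" using S by (simp add: algebra_simps)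
    also have "\<dots> = (a - 1) * (a + 1)" by (simp add: algebra_simps)
    finally show ?thesis using a1 by simp
  qed
  have "Fm = of_nat h * (a - 1)" unfolding Fm_def using fm by simp
  moreover have "Fp = of_nat (h - 1) * (a + 1)" unfolding Fp_def using fp by simp
  ultimately have "a * a = a * (2 * of_nat h)" using S h1 by (simp add: ofh algebra_simps)
  moreover have "a \<noteq> 0" using Rea by auto
  ultimately have aq: "a = 2 * of_nat h" by simp
  show ?thesis
  proof
    fix x
    show "f x = dd x"
    proof (cases "x \<in> basis q")
      case False then show ?thesis using off by (simp add: dd_def)
    next
      case True
      then show ?thesis
        by (cases rule: zcases) (use f1 fm fp aq a_def in \<open>auto simp: dd_def basis_def qdiv ofh\<close>)
    qed
  qed
qed

lemma fpdim_eq: "fpdim q = dd"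
  unfolding fpdim_def using dd_pos uniq by (rule the_equality)

end
theorem theorem4p3:
  fixes q :: nat
  assumes "even q" and "q \<ge> 2"
  shows
   "card (basis q) = q + 1 \<and>
    fpdim_ring q = of_nat (q * (q\<^sup>2 - 1)) \<and>
    fpdim q One = 1 \<and>
    (\<forall>c\<in>{1..q div 2}. fpdim q (Xm c) = of_nat (q - 1)) \<and>
    fpdim q Xq = of_nat q \<and>
    (\<forall>c\<in>{1..(q - 2) div 2}. fpdim q (Xp c) = of_nat (q + 1)) \<and>
    (\<forall>x\<in>basis q. \<forall>y\<in>basis q. \<forall>z\<in>basis q. fus q x y z = fus q y x z) \<and>
    (\<forall>y\<in>basis q. \<forall>z\<in>basis q. fus q One y z = (if y = z then 1 else 0)) \<and>
    (\<forall>c1\<in>{1..q div 2}. \<forall>c2\<in>{1..q div 2}. \<forall>z\<in>basis q.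
       fus q (Xm c1) (Xm c2) z = of_nat (case z of
           One \<Rightarrow> (if c1 = c2 then 1 else 0)
         | Xm c3 \<Rightarrow> (if c1 + c2 + c3 \<notin> {q + 1, 2 * max c1 (max c2 c3)} then 1 else 0)
         | Xq \<Rightarrow> (if c1 = c2 then 0 else 1)
         | Xp c3 \<Rightarrow> 1)) \<and>
    (\<forall>c1\<in>{1..q div 2}. \<forall>z\<in>basis q.
       fus q (Xm c1) Xq z = of_nat (case z of
           One \<Rightarrow> 0
         | Xm c2 \<Rightarrow> (if c1 = c2 then 0 else 1)
         | Xq \<Rightarrow> 1
         | Xp c2 \<Rightarrow> 1)) \<and>
    (\<forall>c1\<in>{1..q div 2}. \<forall>c2\<in>{1..(q - 2) div 2}. \<forall>z\<in>basis q.
       fus q (Xm c1) (Xp c2) z = of_nat (case z of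
           One \<Rightarrow> 0
         | Xm c3 \<Rightarrow> 1
         | Xq \<Rightarrow> 1
         | Xp c3 \<Rightarrow> 1)) \<and>
    (\<forall>z\<in>basis q. fus q Xq Xq z = 1) \<and>
    (\<forall>c1\<in>{1..(q - 2) div 2}. \<forall>z\<in>basis q.
       fus q Xq (Xp c1) z = of_nat (case z of
           One \<Rightarrow> 0
         | Xm c2 \<Rightarrow> 1
         | Xq \<Rightarrow> 1
         | Xp c2 \<Rightarrow> 1 + (if c1 = c2 then 1 else 0))) \<and>
    (\<forall>c1\<in>{1..(q - 2) div 2}. \<forall>c2\<in>{1..(q - 2) div 2}. \<forall>z\<in>basis q.
       fus q (Xp c1) (Xp c2) z = of_nat (case z of
           One \<Rightarrow> (if c1 = c2 then 1 else 0)
         | Xm c3 \<Rightarrow> 1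
         | Xq \<Rightarrow> 1 + (if c1 = c2 then 1 else 0)
         | Xp c3 \<Rightarrow> (if c1 + c2 + c3 \<in> {q - 1, 2 * max c1 (max c2 c3)} then 2 else 1)))"
proof -
  obtain h where qh0: "q = 2 * h" using assms(1) by (auto elim: evenE)
  have h1: "1 \<le> h" using assms(2) qh0 by simp
  interpret qh q h by standard (use qh0 h1 in auto)
  have bq: "Xq \<in> basis q" "One \<in> basis q" unfolding basis_def by auto
  have bm: "c \<in> {1..h} \<Longrightarrow> Xm c \<in> basis q" for c unfolding basis_def qdiv by auto
  have bp: "c \<in> {1..h - 1} \<Longrightarrow> Xp c \<in> basis q" for c unfolding basis_def qdiv by auto
  have c1: "card (basis q) = q + 1" unfolding card_basis qdiv using qh0 h1 by simp
  have "fpdim_ring q = (\<Sum>b\<in>basis q. (lam q b C0)\<^sup>2)"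
    unfolding fpdim_ring_def fpdim_eq by (rule sum.cong[OF refl]) (simp add: dd_def)
  also have "\<dots> = of_nat q * ((of_nat q)\<^sup>2 - 1)" using colnorm_C0 colnorm_sq by simp
  also have "\<dots> = of_nat (q * (q\<^sup>2 - 1))"
  proof -
    have "1 \<le> q\<^sup>2" using assms(2) by (simp add: power2_eq_square Suc_le_eq)
    then show ?thesis by (simp add: of_nat_diff)
  qed
  finally have c2: "fpdim_ring q = of_nat (q * (q\<^sup>2 - 1))" .
  show ?thesis
    unfolding qdiv
    apply (intro conjI)
    subgoal by (rule c1)
    subgoal by (rule c2)
    subgoal using bq by (simp add: fpdim_eq dd_def)
    subgoal using bm assms(2) by (simp add: fpdim_eq dd_def of_nat_diff)
    subgoal using bq by (simp add: fpdim_eq dd_def)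
    subgoal using bp by (simp add: fpdim_eq dd_def)
    subgoal by (intro ballI, rule fus_comm)
    subgoal by (intro ballI, rule unit)
    subgoal by (intro ballI, rule mm)
    subgoal by (intro ballI, rule mq)
    subgoal by (intro ballI, rule mp)
    subgoal by (intro ballI, rule qq)
    subgoal by (intro ballI, rule qp)
    subgoal by (intro ballI, rule pp)
    done
qed

end
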